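(* Let $M$ be a closed manifold immersed in the standard symplectic space $(V,\omega)=(\mathbb{R}^{2d},\sum_{i=1}^d dx_i\wedge dy_i)$. Then for every odd integer $n\ge 3$ there exists a non-degenerate $n$-periodic orbit of the outer symplectic billiard correspondence with respect to $M$.
   Context: Write points of $V=\mathbb{R}^{2d}$ as $z=(x,y)$ with $x,y\in\mathbb{R}^d$, so $\omega((x,y),(x',y'))=x\cdot y'-y\cdot x'$. Points of $M$ are identified with their images in $V$, and for a point $Q$ of $M$, $T_QM\subset V$ denotes the (image of the) tangent space at that point; $T_Q^\omega M=\{\xi\in V:\omega(\xi,\zeta)=0\ \forall\zeta\in T_QM\}$. Two points $z,z'\in V$ are in outer symplectic billiard correspondence with respect to $M$ if $Q=\tfrac12(z+z')$ is a point of $M$ and $z'-z\in T^\omega_QM$. An $n$-periodic orbit is an $n$-tuple $(z_1,\dots,z_n)$ of points of $V$ such that $z_i$ and $z_{i+1}$ are in outer symplectic billiard correspondence for every $i=1,\dots,n$, indices read cyclically ($z_{n+1}=z_1$). It is degenerate if $z_{i-1}=z_{i+1}$ for some $i$ (cyclic indices), and non-degenerate otherwise. *)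

theory Defs
  imports "HOL-Analysis.Analysis"
begin

text \<open>Smooth (C-infinity) maps on an open set: there is a family of iterated directional
  derivatives D vs x = D^k g(x)[vs], each Frechet differentiable in x with the next one as derivative.\<close>
definition smooth_on :: "('a::real_normed_vector \<Rightarrow> 'b::real_normed_vector) \<Rightarrow> 'a set \<Rightarrow> bool" where
  "smooth_on g U \<longleftrightarrow> open U \<and>
     (\<exists>D :: 'a list \<Rightarrow> 'a \<Rightarrow> 'b. D [] = g \<and>
        (\<forall>vs. \<forall>x\<in>U. (D vs has_derivative (\<lambda>v. D (v # vs) x)) (at x)))"

definition injective_derivative_on :: "('a::real_normed_vector \<Rightarrow> 'b::real_normed_vector) \<Rightarrow> 'a set \<Rightarrow> bool" where
  "injective_derivative_on g U \<longleftrightarrow> (\<forall>u\<in>U. \<exists>g'. (g has_derivative g') (at u) \<and> inj g')"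

definition local_param :: "('k::euclidean_space \<Rightarrow> 'n::euclidean_space) \<Rightarrow> 'k set \<Rightarrow> 'n set \<Rightarrow> bool" where
  "local_param \<phi> U N \<longleftrightarrow> smooth_on \<phi> U \<and> injective_derivative_on \<phi> U \<and>
     openin (top_of_set N) (\<phi> ` U) \<and> (\<exists>\<psi>. homeomorphism U (\<phi> ` U) \<phi> \<psi>)"

text \<open>A closed (compact, boundaryless, nonempty) smooth manifold of dimension DIM('k),
  realised (Whitney) as a compact smooth submanifold N of a Euclidean space 'n.\<close>
definition closed_manifold :: "'k::euclidean_space itself \<Rightarrow> 'n::euclidean_space set \<Rightarrow> bool" where
  "closed_manifold (_ :: 'k itself) N \<longleftrightarrow> compact N \<and> N \<noteq> {} \<and>
     (\<forall>p\<in>N. \<exists>(\<phi> :: 'k \<Rightarrow> 'n) U. local_param \<phi> U N \<and> p \<in> \<phi> ` U)"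

definition immersion :: "'k::euclidean_space itself \<Rightarrow> ('n::euclidean_space \<Rightarrow> 'v::euclidean_space) \<Rightarrow> 'n set \<Rightarrow> bool" where
  "immersion (_ :: 'k itself) f N \<longleftrightarrow>
     (\<forall>p\<in>N. \<exists>(\<phi> :: 'k \<Rightarrow> 'n) U. local_param \<phi> U N \<and> p \<in> \<phi> ` U \<and>
        smooth_on (f \<circ> \<phi>) U \<and> injective_derivative_on (f \<circ> \<phi>) U)"

text \<open>Image in V of the tangent space of the manifold at the point q of N (i.e. T_Q M for the
  point Q = f q of M): the range of the derivative of f composed with a local parametrization.\<close>
definition tangent_image :: "'k::euclidean_space itself \<Rightarrow> ('n::euclidean_space \<Rightarrow> 'v::euclidean_space) \<Rightarrow> 'n set \<Rightarrow> 'n \<Rightarrow> 'v set" where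
  "tangent_image (_ :: 'k itself) f N q =
     {w. \<exists>(\<phi> :: 'k \<Rightarrow> 'n) U u g'. local_param \<phi> U N \<and> u \<in> U \<and> \<phi> u = q \<and>
          ((f \<circ> \<phi>) has_derivative g') (at u) \<and> w \<in> range g'}"

definition omega :: "((real^'d) \<times> (real^'d)) \<Rightarrow> ((real^'d) \<times> (real^'d)) \<Rightarrow> real" where
  "omega z z' = fst z \<bullet> snd z' - snd z \<bullet> fst z'"

definition symp_complement :: "((real^'d) \<times> (real^'d)) set \<Rightarrow> ((real^'d) \<times> (real^'d)) set" where
  "symp_complement T = {\<xi>. \<forall>\<zeta>\<in>T. omega \<xi> \<zeta> = 0}"

definition osb_corr :: "'k::euclidean_space itself \<Rightarrow> ('n::euclidean_space \<Rightarrow> (real^'d) \<times> (real^'d)) \<Rightarrow> 'n set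
    \<Rightarrow> (real^'d) \<times> (real^'d) \<Rightarrow> (real^'d) \<times> (real^'d) \<Rightarrow> bool" where
  "osb_corr K f N z z' \<longleftrightarrow>
     (\<exists>q\<in>N. f q = (1/2) *\<^sub>R (z + z') \<and> z' - z \<in> symp_complement (tangent_image K f N q))"

definition periodic_orbit :: "'k::euclidean_space itself \<Rightarrow> ('n::euclidean_space \<Rightarrow> (real^'d) \<times> (real^'d)) \<Rightarrow> 'n set
    \<Rightarrow> nat \<Rightarrow> (nat \<Rightarrow> (real^'d) \<times> (real^'d)) \<Rightarrow> bool" where
  "periodic_orbit K f N n z \<longleftrightarrow> (\<forall>i<n. osb_corr K f N (z i) (z (Suc i mod n)))"

definition nondegenerate_orbit :: "nat \<Rightarrow> (nat \<Rightarrow> 'a) \<Rightarrow> bool" where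
  "nondegenerate_orbit n z \<longleftrightarrow> (\<forall>i<n. z ((i + n - 1) mod n) \<noteq> z (Suc i mod n))"

end

theory Submission
  imports Defs
begin


lemma omega_self[simp]: "omega a a = 0"
  by (simp add: omega_def inner_commute)
lemma omega_antisym: "omega a b = - omega b a"
  by (simp add: omega_def inner_commute)
lemma omega_add_left: "omega (a + b) c = omega a c + omega b c"
  by (simp add: omega_def inner_add_left)
lemma omega_diff_left: "omega (a - b) c = omega a c - omega b c"
  by (simp add: omega_def inner_diff_left)
lemma omega_add_right: "omega c (a + b) = omega c a + omega c b"
  by (simp add: omega_def inner_add_right)
lemma omega_diff_right: "omega c (a - b) = omega c a - omega c b"
  by (simp add: omega_def inner_diff_right)
lemma omega_scale_left: "omega (r *\<^sub>R a) c = r * omega a c"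
  by (simp add: omega_def algebra_simps)
lemma omega_scale_right: "omega c (r *\<^sub>R a) = r * omega c a"
  by (simp add: omega_def algebra_simps)
lemma omega_sum_right: "omega c (sum g A) = (\<Sum>j\<in>A. omega c (g j))"
  by (simp add: omega_def fst_sum snd_sum inner_sum_right sum_subtractf)
lemma omega_minus_left: "omega (- a) c = - omega a c"
  by (simp add: omega_def)

definition cc :: "nat \<Rightarrow> nat \<Rightarrow> real" where
  "cc i j = (if i < j then (if even (j - i) then 1 else -1) else 0)"

definition VV :: "nat \<Rightarrow> (nat \<Rightarrow> (real^'d) \<times> (real^'d)) \<Rightarrow> nat \<Rightarrow> (real^'d) \<times> (real^'d)" where
  "VV n P m = (\<Sum>j<n. (cc m j - cc j m) *\<^sub>R P j)"

definition FF :: "nat \<Rightarrow> (nat \<Rightarrow> (real^'d) \<times> (real^'d)) \<Rightarrow> real" where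
  "FF n P = (\<Sum>i<n. \<Sum>j<n. cc i j * omega (P i) (P j))"

lemma cc_same[simp]: "cc i i = 0" by (simp add: cc_def)

lemma VV_upd_same: "VV n (P(k:=x)) k = VV n P k"
  unfolding VV_def by (intro sum.cong) auto

lemma VV_upd_other:
  assumes "k < n" "m \<noteq> k"
  shows "VV n (P(k:=x)) m = VV n P m + (cc m k - cc k m) *\<^sub>R (x - P k)"
proof -
  have f: "finite {..<n}" by simp
  have a: "VV n (P(k:=x)) m = (cc m k - cc k m) *\<^sub>R x + (\<Sum>j\<in>{..<n}-{k}. (cc m j - cc j m) *\<^sub>R P j)"
    unfolding VV_def using assms by (simp add: sum.remove[OF f, of k])
  have b: "VV n P m = (cc m k - cc k m) *\<^sub>R P k + (\<Sum>j\<in>{..<n}-{k}. (cc m j - cc j m) *\<^sub>R P j)"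
    unfolding VV_def using assms by (simp add: sum.remove[OF f, of k])
  show ?thesis unfolding a b by (simp add: algebra_simps)
qed

lemma FF_decomp:
  assumes "k < n"
  shows "FF n Q = (\<Sum>i\<in>{..<n}-{k}. \<Sum>j\<in>{..<n}-{k}. cc i j * omega (Q i) (Q j)) + omega (Q k) (VV n Q k)"
proof -
  have f: "finite {..<n}" by simp
  let ?g = "\<lambda>i j. cc i j * omega (Q i) (Q j)"
  have "FF n Q = (\<Sum>i\<in>{..<n}. \<Sum>j\<in>{..<n}. ?g i j)" by (simp add: FF_def)
  also have "\<dots> = (\<Sum>j\<in>{..<n}. ?g k j) + (\<Sum>i\<in>{..<n}-{k}. \<Sum>j\<in>{..<n}. ?g i j)"
    using assms by (simp add: sum.remove[OF f, of k])
  also have "(\<Sum>i\<in>{..<n}-{k}. \<Sum>j\<in>{..<n}. ?g i j) = (\<Sum>i\<in>{..<n}-{k}. ?g i k + (\<Sum>j\<in>{..<n}-{k}. ?g i j))"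
    using assms by (intro sum.cong) (simp_all add: sum.remove[OF f, of k])
  also have "\<dots> = (\<Sum>i\<in>{..<n}-{k}. ?g i k) + (\<Sum>i\<in>{..<n}-{k}. \<Sum>j\<in>{..<n}-{k}. ?g i j)"
    by (simp add: sum.distrib)
  also have "(\<Sum>i\<in>{..<n}-{k}. ?g i k) = (\<Sum>i\<in>{..<n}. ?g i k)"
    using assms by (simp add: sum.remove[OF f, of k])
  finally have 1: "FF n Q = (\<Sum>j<n. ?g k j) + (\<Sum>i<n. ?g i k) + (\<Sum>i\<in>{..<n}-{k}. \<Sum>j\<in>{..<n}-{k}. ?g i j)"
    by simp
  have "omega (Q k) (VV n Q k) = (\<Sum>j<n. (cc k j - cc j k) * omega (Q k) (Q j))"
    unfolding VV_def by (simp add: omega_sum_right omega_scale_right)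
  also have "\<dots> = (\<Sum>j<n. ?g k j) + (\<Sum>i<n. ?g i k)"
  proof -
    have "(cc k j - cc j k) * omega (Q k) (Q j) = cc k j * omega (Q k) (Q j) + cc j k * omega (Q j) (Q k)" for j
      using omega_antisym[of "Q j" "Q k"] by (simp add: algebra_simps)
    then show ?thesis by (simp add: sum.distrib)
  qed
  finally show ?thesis using 1 by simp
qed

lemma FF_upd:
  assumes "k < n"
  shows "FF n (P(k:=x)) = FF n (P(k:=y)) + omega (x - y) (VV n P k)"
proof -
  have "(\<Sum>i\<in>{..<n}-{k}. \<Sum>j\<in>{..<n}-{k}. cc i j * omega ((P(k:=x)) i) ((P(k:=x)) j))
      = (\<Sum>i\<in>{..<n}-{k}. \<Sum>j\<in>{..<n}-{k}. cc i j * omega ((P(k:=y)) i) ((P(k:=y)) j))"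
    by (intro sum.cong) auto
  then show ?thesis
    using FF_decomp[OF assms, of "P(k:=x)"] FF_decomp[OF assms, of "P(k:=y)"]
    by (simp add: VV_upd_same omega_diff_left)
qed

lemma cc_coef:
  assumes "odd n" "k < n" "j < n" "Suc k < n"
  shows "cc k j - cc j k + cc (Suc k) j - cc j (Suc k) = (if j = k then 1 else if j = Suc k then -1 else 0)"
  using assms unfolding cc_def by (auto split: if_splits; presburger)

lemma cc_coef2:
  assumes "odd n" "j < n" "n \<ge> 3"
  shows "cc (n-1) j - cc j (n-1) + cc 0 j - cc j 0 = (if j = n-1 then 1 else if j = 0 then -1 else 0)"
  using assms unfolding cc_def by (auto split: if_splits; presburger)

lemma sum_two_delta:
  fixes P :: "nat \<Rightarrow> 'a::real_vector"
  assumes "k < n" "k' < n" "k \<noteq> k'"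
  shows "(\<Sum>j<n. (if j = k then 1 else if j = k' then -1 else 0) *\<^sub>R P j) = P k - P k'"
proof -
  have "(\<Sum>j<n. (if j = k then 1 else if j = k' then -1 else 0) *\<^sub>R P j)
      = (\<Sum>j<n. (if j = k then P j else 0) - (if j = k' then P j else 0))"
    using assms by (intro sum.cong) auto
  also have "\<dots> = P k - P k'" using assms by (simp add: sum_subtractf)
  finally show ?thesis .
qed

lemma VV_pair:
  assumes "odd n" "n \<ge> 3" "k < n"
  shows "VV n P k + VV n P (Suc k mod n) = P k - P (Suc k mod n)"
proof (cases "Suc k < n")
  case True
  have "VV n P k + VV n P (Suc k mod n) = (\<Sum>j<n. (cc k j - cc j k + cc (Suc k) j - cc j (Suc k)) *\<^sub>R P j)"
    using True unfolding VV_def by (simp add: sum.distrib[symmetric] algebra_simps)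
  also have "\<dots> = (\<Sum>j<n. (if j = k then 1 else if j = Suc k then -1 else 0) *\<^sub>R P j)"
    using assms True by (intro sum.cong) (simp_all add: cc_coef)
  also have "\<dots> = P k - P (Suc k)" using True by (intro sum_two_delta) auto
  finally show ?thesis using True by simp
next
  case False
  then have sk: "Suc k = n" using assms by simp
  then have k: "k = n - 1" "Suc k mod n = 0" by auto
  have "VV n P k + VV n P (Suc k mod n) = (\<Sum>j<n. (cc (n-1) j - cc j (n-1) + cc 0 j - cc j 0) *\<^sub>R P j)"
    using k unfolding VV_def by (simp add: sum.distrib[symmetric] algebra_simps)
  also have "\<dots> = (\<Sum>j<n. (if j = n-1 then 1 else if j = 0 then -1 else 0) *\<^sub>R P j)"
  proof (intro sum.cong refl)
    fix j assume "j \<in> {..<n}"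
    then have "cc (n-1) j - cc j (n-1) + cc 0 j - cc j 0 = (if j = n-1 then 1 else if j = 0 then -1 else 0)"
      using cc_coef2[OF assms(1) _ assms(2)] by auto
    then show "(cc (n-1) j - cc j (n-1) + cc 0 j - cc j 0) *\<^sub>R P j = (if j = n-1 then 1 else if j = 0 then -1 else 0) *\<^sub>R P j"
      by (simp only:)
  qed
  also have "\<dots> = P (n-1) - P 0" using assms by (intro sum_two_delta) auto
  finally show ?thesis using k by simp
qed

lemma cc_next:
  assumes "odd n" "n \<ge> 3" "k < n"
  shows "cc (Suc k mod n) k - cc k (Suc k mod n) = 1"
proof (cases "Suc k < n")
  case True then show ?thesis by (simp add: cc_def)
next
  case False
  then have sk: "Suc k = n" using assms by simp
  then have k: "k = n - 1" "Suc k mod n = 0" by auto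
  show ?thesis using assms unfolding k cc_def by auto
qed



lemma smooth_cont: "smooth_on g U \<Longrightarrow> open U \<and> continuous_on U g"
  unfolding smooth_on_def
  by (metis continuous_at_imp_continuous_on has_derivative_continuous)

lemma f_continuous:
  assumes "immersion TYPE('k::euclidean_space) f N"
  shows "continuous_on N f"
proof -
  have "continuous (at p within N) f" if p: "p \<in> N" for p
  proof -
    obtain \<phi> :: "'k \<Rightarrow> 'a" and U where lp: "local_param \<phi> U N" and pU: "p \<in> \<phi>`U"
      and sm: "smooth_on (f \<circ> \<phi>) U"
      using assms p unfolding immersion_def by blast
    have cfp: "continuous_on U (f \<circ> \<phi>)" using smooth_cont[OF sm] by blast
    from lp obtain \<psi> where hom: "homeomorphism U (\<phi>`U) \<phi> \<psi>" and op: "openin (top_of_set N) (\<phi>`U)"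
      unfolding local_param_def by blast
    have cpsi: "continuous_on (\<phi>`U) \<psi>" and psiU: "\<psi> ` (\<phi>`U) \<subseteq> U"
      using hom by (auto simp: homeomorphism_def)
    have "continuous_on (\<phi>`U) (\<lambda>y. (f \<circ> \<phi>) (\<psi> y))"
      by (rule continuous_on_compose2[OF cfp cpsi psiU])
    moreover have "\<And>y. y\<in>\<phi>`U \<Longrightarrow> (f \<circ> \<phi>) (\<psi> y) = f y" using hom by (auto simp: homeomorphism_def)
    ultimately have "continuous_on (\<phi>`U) f" by (rule continuous_on_eq) simp
    then have c1: "continuous (at p within \<phi>`U) f"
      using pU continuous_on_eq_continuous_within by blast
    obtain T where T: "open T" "\<phi>`U = N \<inter> T" using op unfolding openin_open by blast
    have "at p within N = at p within \<phi>`U"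
      using T pU by (intro at_within_nhd[of p T]) auto
    then show ?thesis using c1 by simp
  qed
  then show ?thesis using continuous_on_eq_continuous_within by blast
qed

lemma K_infinite:
  assumes "closed_manifold TYPE('k::euclidean_space) N" "immersion TYPE('k) f N"
  shows "infinite (f`N)"
proof
  assume fin: "finite (f`N)"
  obtain p where p: "p \<in> N" using assms(1) unfolding closed_manifold_def by blast
  obtain \<phi> :: "'k \<Rightarrow> 'a" and U where lp: "local_param \<phi> U N" and pU: "p \<in> \<phi>`U"
      and sm: "smooth_on (f \<circ> \<phi>) U" and inj: "injective_derivative_on (f \<circ> \<phi>) U"
    using assms(2) p unfolding immersion_def by blast
  obtain u where u: "u \<in> U" using pU by blast
  obtain g' where der: "((f \<circ> \<phi>) has_derivative g') (at u)" and ig: "inj g'"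
    using inj u unfolding injective_derivative_on_def by blast
  have oU: "open U" and cU: "continuous_on U (f \<circ> \<phi>)" using smooth_cont[OF sm] by auto
  obtain r where r: "r > 0" "ball u r \<subseteq> U" using oU u openE by blast
  have sub: "\<phi>`U \<subseteq> N" using lp unfolding local_param_def by (meson openin_imp_subset)
  let ?S = "(f \<circ> \<phi>)`ball u r"
  have "connected ?S"
    using cU r by (intro connected_continuous_image) (auto intro: continuous_on_subset)
  moreover have "?S \<subseteq> f`N" using r sub by auto
  then have "finite ?S" using fin finite_subset by blast
  moreover have "?S \<noteq> {}" using r by simp
  ultimately obtain c where c: "?S = {c}" using connected_finite_iff_sing by blast
  have cc: "\<And>y. y \<in> ball u r \<Longrightarrow> (f \<circ> \<phi>) y = c" using c by blast
  have "((\<lambda>y. c) has_derivative g') (at u)"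
    by (rule has_derivative_transform_within_open[OF der open_ball _ cc]) (simp_all add: r(1))
  moreover have "((\<lambda>y. c) has_derivative (\<lambda>_. 0)) (at u)" by simp
  ultimately have "g' = (\<lambda>_. 0)" by (rule has_derivative_unique)
  moreover obtain e :: 'k where "e \<in> Basis" using nonempty_Basis by blast
  then have e0: "e \<noteq> 0" by auto
  ultimately have "g' e = g' 0" by simp
  then have "e = 0" using ig by (simp add: inj_eq)
  then show False using e0 by simp
qed

lemma idx:
  assumes "n \<ge> 3" "k < n"
  shows "Suc k mod n < n" "(k + n - 1) mod n < n" "Suc k mod n \<noteq> k" "(k + n - 1) mod n \<noteq> k"
    "(k + n - 1) mod n \<noteq> Suc k mod n" "Suc (Suc k mod n) mod n \<noteq> k"
    "Suc (Suc k mod n) mod n \<noteq> Suc k mod n" "Suc ((k + n - 1) mod n) mod n = k"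
    "\<And>j. j < n \<Longrightarrow> Suc j mod n = k \<Longrightarrow> j = (k + n - 1) mod n"
    "\<And>j. j < n \<Longrightarrow> Suc j mod n = Suc k mod n \<Longrightarrow> j = k"
proof -
  have sm: "Suc j mod n = (if Suc j = n then 0 else Suc j)" if "j < n" for j
    using that by auto
  have km: "(k + n - 1) mod n = (if k = 0 then n - 1 else k - 1)"
  proof (cases "k = 0")
    case True then show ?thesis using assms by simp
  next
    case False
    then have "k + n - 1 = (k - 1) + n" by simp
    then have "(k + n - 1) mod n = ((k - 1) + n) mod n" by simp
    also have "\<dots> = k - 1" using assms by simp
    finally show ?thesis using False by simp
  qed
  then have km': "(k + n - Suc 0) mod n = (if k = 0 then n - 1 else k - 1)" by simp
  show "Suc k mod n < n" "(k + n - 1) mod n < n" using assms by auto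
  show "Suc k mod n \<noteq> k" "(k + n - 1) mod n \<noteq> k"
    "(k + n - 1) mod n \<noteq> Suc k mod n" "Suc (Suc k mod n) mod n \<noteq> k"
    "Suc (Suc k mod n) mod n \<noteq> Suc k mod n" "Suc ((k + n - 1) mod n) mod n = k"
    using assms by (auto simp add: km km' sm)
  show "\<And>j. j < n \<Longrightarrow> Suc j mod n = k \<Longrightarrow> j = (k + n - 1) mod n"
    "\<And>j. j < n \<Longrightarrow> Suc j mod n = Suc k mod n \<Longrightarrow> j = k"
    using assms by (auto simp add: km km' sm split: if_splits)
qed

lemma cont_coord[continuous_intros]: "continuous_on S (\<lambda>P::nat \<Rightarrow> 'b::topological_space. P i)"
  by (rule continuous_on_subset[OF continuous_on_product_coordinates]) simp

lemma omega_linear: "linear (\<lambda>w. omega w V)"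
  by (rule linearI) (simp_all add: omega_add_left omega_scale_left)



lemma omega_minus_right: "omega c (- a) = - omega c a"
  by (simp add: omega_def)

theorem mainTheorem1:
  fixes N :: "'n::euclidean_space set"
    and f :: "'n \<Rightarrow> (real^'d) \<times> (real^'d)"
    and n :: nat
  assumes "closed_manifold TYPE('k::euclidean_space) N"
    and "immersion TYPE('k) f N"
    and "odd n" and "n \<ge> 3"
  shows "\<exists>z. periodic_orbit TYPE('k) f N n z \<and> nondegenerate_orbit n z"
proof -
  let ?K = "f ` N"
  have cf: "continuous_on N f" using assms(2) by (rule f_continuous)
  have cN: "compact N" "N \<noteq> {}" using assms(1) unfolding closed_manifold_def by auto
  have cK: "compact ?K" using cN cf compact_continuous_image by blast
  have infK: "infinite ?K" using assms(1,2) by (rule K_infinite)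
  have avoid: "\<exists>y\<in>?K. y \<noteq> a \<and> y \<noteq> b" for a b
  proof (rule ccontr)
    assume "\<not> ?thesis"
    then have "?K \<subseteq> {a, b}" by blast
    then have "finite ?K" by (rule finite_subset) simp
    then show False using infK by blast
  qed
  define C where "C = PiE UNIV (\<lambda>i::nat. if i < n then ?K else {0})"
  have inC: "Q \<in> C \<longleftrightarrow> (\<forall>i<n. Q i \<in> ?K) \<and> (\<forall>i\<ge>n. Q i = 0)" for Q
  proof -
    have "Q \<in> C \<longleftrightarrow> (\<forall>i. Q i \<in> (if i < n then ?K else {0}))"
      unfolding C_def PiE_UNIV_domain by (simp add: Pi_iff)
    also have "\<dots> \<longleftrightarrow> (\<forall>i<n. Q i \<in> ?K) \<and> (\<forall>i\<ge>n. Q i = 0)"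
    proof (intro iffI conjI allI impI)
      fix i assume H: "\<forall>i. Q i \<in> (if i < n then ?K else {0})"
      show "Q i \<in> ?K" if "i < n" using H[rule_format, of i] that by simp
      show "Q i = 0" if "i \<ge> n" using H[rule_format, of i] that by simp
    next
      fix i assume H: "(\<forall>i<n. Q i \<in> ?K) \<and> (\<forall>i\<ge>n. Q i = 0)"
      show "Q i \<in> (if i < n then ?K else {0})"
      proof (cases "i < n")
        case True then show ?thesis using H by simp
      next
        case False then show ?thesis using H by simp
      qed
    qed
    finally show ?thesis .
  qed
  have "compactin (product_topology (\<lambda>i. euclidean) UNIV) C"
    unfolding C_def by (subst compactin_PiE) (auto simp: cK)
  then have compC: "compact C" by (metis compactin_euclidean_iff euclidean_product_topology)
  obtain a where a: "a \<in> ?K" using cN by blast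
  have "(\<lambda>i. if i < n then a else 0) \<in> C" using a by (simp add: inC)
  then have Cne: "C \<noteq> {}" by blast
  have contF: "continuous_on C (FF n)"
    unfolding FF_def[abs_def] omega_def by (intro continuous_intros)
  obtain P0 where P0: "P0 \<in> C" "\<forall>Q\<in>C. FF n Q \<le> FF n P0"
    using continuous_attains_sup[OF compC Cne contF] by blast
  define M where "M = {P\<in>C. \<forall>Q\<in>C. FF n Q \<le> FF n P}"
  define bad where "bad P = {k. k<n \<and> P k = P (Suc k mod n)}" for P :: "nat \<Rightarrow> (real^'d) \<times> (real^'d)"
  have "P0 \<in> M" using P0 by (simp add: M_def)
  then obtain P where PM: "P \<in> M" and Pmin: "\<forall>Q. Q \<in> M \<longrightarrow> card (bad P) \<le> card (bad Q)"
    using ex_has_least_nat[of "\<lambda>P. P \<in> M" P0 "\<lambda>P. card (bad P)"] by blast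
  have PC: "P \<in> C" and Pmax: "\<forall>Q\<in>C. FF n Q \<le> FF n P" using PM by (auto simp: M_def)
  have PK: "\<forall>i<n. P i \<in> ?K" using PC inC by blast
  have n0: "n > 0" using assms by simp
  have nobad: "bad P = {}"
  proof (rule ccontr)
    assume "bad P \<noteq> {}"
    then obtain k where k: "k < n" "P k = P (Suc k mod n)" unfolding bad_def by blast
    define k1 where "k1 = Suc k mod n"
    define km where "km = (k + n - 1) mod n"
    define k2 where "k2 = Suc k1 mod n"
    note ix = idx[OF assms(4) k(1), folded k1_def km_def, folded k2_def]
    define p where "p = P k"
    define V where "V = VV n P k"
    have Pk1: "P k1 = p" using k by (simp add: p_def k1_def)
    have V1: "VV n P k1 = - V"
    proof -
      have "VV n P k + VV n P k1 = 0"
        using VV_pair[OF assms(3,4) k(1), of P] Pk1 by (simp add: p_def k1_def)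
      then have "V = - VV n P k1" unfolding V_def by (simp only: add_eq_0_iff2)
      then show ?thesis by simp
    qed
    have G: "FF n (P(k:=u, k1:=v)) = FF n P + omega (u - p) V - omega (v - p) V + omega (v - p) (u - p)" for u v
    proof -
      have "FF n (P(k:=u, k1:=v)) = FF n (P(k:=u, k1:=p)) + omega (v - p) (VV n (P(k:=u)) k1)"
        by (rule FF_upd[OF ix(1), of "P(k:=u)" v p])
      also have "P(k:=u, k1:=p) = P(k:=u)" using Pk1 ix(3) by (auto simp: fun_eq_iff k1_def)
      also have "FF n (P(k:=u)) = FF n (P(k:=p)) + omega (u - p) V"
        using FF_upd[OF k(1), of P u p] by (simp add: V_def)
      also have "P(k:=p) = P" by (simp add: p_def)
      also have "VV n (P(k:=u)) k1 = - V + (u - p)"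
      proof -
        have e: "cc k1 k - cc k k1 = 1" using cc_next[OF assms(3,4) k(1)] by (simp add: k1_def)
        have "VV n (P(k:=u)) k1 = VV n P k1 + (u - P k)"
          using VV_upd_other[OF k(1) ix(3), of P u] e by simp
        then show ?thesis using V1 by (simp add: p_def)
      qed
      finally have X: "FF n (P(k:=u, k1:=v)) = FF n P + omega (u - p) V + omega (v - p) (- V + (u - p))" .
      have "omega (v - p) (- V + (u - p)) = - omega (v - p) V + omega (v - p) (u - p)"
        by (simp only: omega_add_right omega_minus_right)
      then show ?thesis using X by linarith
    qed
    have sym: "FF n (P(k:=u, k1:=v)) + FF n (P(k:=v, k1:=u)) = 2 * FF n P" for u v
      using G[of u v] G[of v u] omega_antisym[of "v - p" "u - p"] by simp
    have upC: "P(k:=u, k1:=v) \<in> C" if "u \<in> ?K" "v \<in> ?K" for u v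
      using PC that ix(1) k(1) unfolding inC by auto
    obtain x where x: "x \<in> ?K" "x \<noteq> P km" using avoid by blast
    obtain y where y: "y \<in> ?K" "y \<noteq> x" "y \<noteq> P k2" using avoid by blast
    define P' where "P' = P(k:=x, k1:=y)"
    have "FF n P' \<le> FF n P" using Pmax upC x y by (simp add: P'_def)
    moreover have "FF n (P(k:=y, k1:=x)) \<le> FF n P" using Pmax upC x y by simp
    ultimately have "FF n P' = FF n P" using sym[of x y] by (simp add: P'_def)
    then have P'M: "P' \<in> M" using upC x y Pmax by (simp add: M_def P'_def)
    have sub: "bad P' \<subseteq> bad P - {k}"
    proof
      fix j assume "j \<in> bad P'"
      then have j: "j < n" "P' j = P' (Suc j mod n)" by (auto simp: bad_def)
      have "j \<noteq> km"
      proof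
        assume "j = km"
        then have "P' j = P km" "P' (Suc j mod n) = x" using ix(3,4,5,8) by (auto simp: P'_def)
        then show False using j x by simp
      qed
      moreover have "j \<noteq> k"
      proof
        assume "j = k"
        then have "P' j = x" "P' (Suc j mod n) = y" using ix(3) by (auto simp: P'_def k1_def)
        then show False using j y by simp
      qed
      moreover have "j \<noteq> k1"
      proof
        assume "j = k1"
        then have "P' j = y" "P' (Suc j mod n) = P k2" using ix(6,7) by (auto simp: P'_def k2_def)
        then show False using j y by simp
      qed
      ultimately have "Suc j mod n \<noteq> k" "Suc j mod n \<noteq> k1"
        using ix(9)[OF j(1)] ix(10)[OF j(1)] unfolding k1_def by blast+
      then have "P j = P (Suc j mod n)"
        using j \<open>j \<noteq> k\<close> \<open>j \<noteq> k1\<close> by (simp add: P'_def)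
      then show "j \<in> bad P - {k}" using j \<open>j \<noteq> k\<close> by (simp add: bad_def)
    qed
    have "k \<in> bad P" using k by (simp add: bad_def)
    have fin: "finite (bad P)" by (rule finite_subset[of _ "{..<n}"]) (auto simp: bad_def)
    have "bad P' \<subset> bad P" using sub \<open>k \<in> bad P\<close> by blast
    then have lt: "card (bad P') < card (bad P)" by (rule psubset_card_mono[OF fin])
    have "card (bad P) \<le> card (bad P')" using Pmin P'M by blast
    then show False using lt by simp
  qed
  define z where "z = (\<lambda>i. P i + VV n P i)"
  have zsum: "z k + z (Suc k mod n) = 2 *\<^sub>R P k" if "k < n" for k
  proof -
    have "VV n P k + VV n P (Suc k mod n) = P k - P (Suc k mod n)"
      using VV_pair[OF assms(3,4) that] .
    then show ?thesis unfolding z_def by (simp add: algebra_simps scaleR_2)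
  qed
  have zdiff: "z (Suc k mod n) - z k = (-2) *\<^sub>R VV n P k" if "k < n" for k
  proof -
    have "z (Suc k mod n) = 2 *\<^sub>R P k - z k" using zsum[OF that] by (simp add: algebra_simps)
    then show ?thesis unfolding z_def by (simp add: algebra_simps scaleR_2)
  qed
  show ?thesis
  proof (intro exI conjI)
    show "periodic_orbit TYPE('k) f N n z"
      unfolding periodic_orbit_def osb_corr_def
    proof (intro allI impI)
      fix i assume i: "i < n"
      obtain q where q: "q \<in> N" "f q = P i" using PK i by force
      define V where "V = VV n P i"
      have "z (Suc i mod n) - z i \<in> symp_complement (tangent_image TYPE('k) f N q)"
        unfolding symp_complement_def
      proof (intro CollectI ballI)
        fix w assume "w \<in> tangent_image TYPE('k) f N q"
        then obtain \<phi> :: "'k \<Rightarrow> 'n" and U u g' where lp: "local_param \<phi> U N" and u: "u \<in> U" "\<phi> u = q"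
          and der: "((f \<circ> \<phi>) has_derivative g') (at u)" and w: "w \<in> range g'"
          unfolding tangent_image_def by blast
        have oU: "open U" using lp unfolding local_param_def smooth_on_def by blast
        have sub: "\<phi>`U \<subseteq> N" using lp unfolding local_param_def by (meson openin_imp_subset)
        define h where "h y = FF n P - omega (P i) V + omega ((f \<circ> \<phi>) y) V" for y
        have hF: "h y = FF n (P(i := f (\<phi> y)))" for y
          using FF_upd[OF i, of P "f (\<phi> y)" "P i"] by (simp add: h_def V_def omega_diff_left)
        have bl: "bounded_linear (\<lambda>w. omega w V)"
          using omega_linear linear_conv_bounded_linear by blast
        have "(h has_derivative (\<lambda>v. omega (g' v) V)) (at u)"
        proof -
          have d1: "((\<lambda>y. omega ((f \<circ> \<phi>) y) V) has_derivative (\<lambda>v. omega (g' v) V)) (at u)"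
            by (rule bounded_linear.has_derivative[OF bl der])
          show ?thesis unfolding h_def[abs_def]
            using has_derivative_add[OF has_derivative_const[of "FF n P - omega (P i) V"] d1] by simp
        qed
        moreover have "\<forall>y\<in>U. h y \<le> h u"
        proof
          fix y assume "y \<in> U"
          then have "P(i := f (\<phi> y)) \<in> C" using PC sub i unfolding inC by auto
          then have "h y \<le> FF n P" using Pmax hF by simp
          moreover have "h u = FF n P" using hF[of u] u q by simp
          ultimately show "h y \<le> h u" by simp
        qed
        ultimately have "(\<lambda>v. omega (g' v) V) = (\<lambda>v. 0)"
          using differential_zero_maxmin[OF u(1) oU] by blast
        then have "\<forall>v. omega (g' v) V = 0" by metis
        then have "omega w V = 0" using w by auto
        then show "omega (z (Suc i mod n) - z i) w = 0"
        proof -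
          have "omega V w = 0" using \<open>omega w V = 0\<close> omega_antisym[of V w] by simp
          then have "omega (VV n P i) w = 0" by (simp add: V_def)
          then show ?thesis using zdiff[OF i] by (simp add: omega_scale_left omega_minus_left)
        qed
      qed
      moreover have "f q = (1/2) *\<^sub>R (z i + z (Suc i mod n))"
        using zsum[OF i] q by simp
      ultimately show "\<exists>q\<in>N. f q = (1/2) *\<^sub>R (z i + z (Suc i mod n)) \<and>
          z (Suc i mod n) - z i \<in> symp_complement (tangent_image TYPE('k) f N q)"
        using q by blast
    qed
    show "nondegenerate_orbit n z"
      unfolding nondegenerate_orbit_def
    proof (intro allI impI)
      fix i assume i: "i < n"
      define km where "km = (i + n - 1) mod n"
      note ix = idx[OF assms(4) i, folded km_def]
      have e1: "z km + z i = 2 *\<^sub>R P km" using zsum[OF ix(2)] ix(8) by simp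
      have e2: "z i + z (Suc i mod n) = 2 *\<^sub>R P i" using zsum[OF i] .
      show "z ((i + n - 1) mod n) \<noteq> z (Suc i mod n)"
      proof
        assume "z ((i + n - 1) mod n) = z (Suc i mod n)"
        then have "2 *\<^sub>R P km = 2 *\<^sub>R P i" using e1 e2 by (simp add: km_def add.commute)
        then have "P km = P (Suc km mod n)" using ix(8) by simp
        then have "km \<in> bad P" using ix(2) by (simp add: bad_def)
        then show False using nobad by simp
      qed
    qed
  qed
qed


end
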